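(* Let $\Bbbk$ be a field of characteristic $\neq2$ and $L$ a Lie tri-algebra over $\Bbbk$. Let $L_0=\mathrm{span}\{[a\vdash b]-[a\dashv b],\ [a\vdash b]-[a\perp b]\mid a,b\in L\}$, and let $X=X_0\cup X_1$ (disjoint union) be a linearly ordered basis of $L$ such that $X_0$ is a basis of $L_0$. For $x,y\in X$ let $\mu_\dashv(x,y)$ and $\mu_\perp(x,y)$ denote $[x\dashv y]$ and $[x\perp y]$ written as linear combinations of $X$, and for $\mu=\sum_i\alpha_i z_i$ ($z_i\in X$) put $\dot\mu=\sum_i\alpha_i\dot z_i$. In the free associative algebra $\mathrm{As}\langle X\cup\dot X\rangle$, where $\dot X=\{\dot x\mid x\in X\}$ is a disjoint copy of $X$, order $X\cup\dot X$ by extending the order of $X$ via: $x>y\Rightarrow\dot x>\dot y$, and $\dot x>y$ for all $x,y\in X$; order words by deg-lex order. Then the set of polynomials $$x\ (x\in X_0);\qquad xy-yx-\mu_\dashv(x,y)\ (x,y\in X_1,\ x>y);$$ $$\dot xy-y\dot x-\dot\mu_\dashv(x,y)\ (x\in X,\ y\in X_1);\qquad \dot x\dot y-\dot y\dot x-\dot\mu_\perp(x,y)\ (x,y\in X,\ x>y)$$ is a Gröbner–Shirshov basis in $\mathrm{As}\langle X\cup\dot X\rangle$.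
   Context: A Lie tri-algebra is a vector space with bilinear operations $[\cdot\vdash\cdot]$, $[\cdot\dashv\cdot]$, $[\cdot\perp\cdot]$ such that $[a\dashv b]=-[b\vdash a]$, $[a\perp b]=-[b\perp a]$, $[[x_1\vdash x_2]\vdash x_3]-[x_1\vdash[x_2\vdash x_3]]+[x_2\vdash[x_1\vdash x_3]]=0$, $[[x_1\perp x_2]\vdash x_3]=[[x_1\vdash x_2]\vdash x_3]$, $[[x_1\vdash x_2]\perp x_3]-[x_1\vdash[x_2\perp x_3]]-[[x_1\vdash x_3]\perp x_2]=0$, and $[[x_1\perp x_2]\perp x_3]+[[x_2\perp x_3]\perp x_1]+[[x_3\perp x_1]\perp x_2]=0$. Gröbner–Shirshov basis (associative case): deg-lex order compares words first by length, then lexicographically. For a nonzero polynomial $f$, $\bar f$ is its largest word; $f$ is monic if $\bar f$ has coefficient 1 (all listed polynomials are monic with leading words $x$, $xy$, $\dot xy$, $\dot x\dot y$ respectively). For monic $f,g$: if $\bar f=u\bar g u'$ the composition of inclusion is $(f,g)_w=f-ugu'$ with $w=\bar f$; if $\bar f=uu'$, $\bar g=u'u''$ with $u'$ nonempty and $u,u''$ nonempty, the composition of intersection is $(f,g)_w=fu''-ug$ with $w=uu'u''$. A set $S$ of monic polynomials is a Gröbner–Shirshov basis if every composition $(f,g)_w$ of elements $f,g\in S$ can be written as $\sum_i\alpha_i u_is_iu_i'$ with $s_i\in S$, $\alpha_i\in\Bbbk$, words $u_i,u_i'$, and $u_i\bar s_iu_i'<w$. *)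

theory Defs
  imports Complex_Main "HOL-Library.Poly_Mapping"
begin

definition bilinear_map :: "('k::field \<Rightarrow> 'v::ab_group_add \<Rightarrow> 'v) \<Rightarrow> ('v \<Rightarrow> 'v \<Rightarrow> 'v) \<Rightarrow> bool" where
  "bilinear_map sc f \<longleftrightarrow>
     (\<forall>x. Vector_Spaces.linear sc sc (f x)) \<and> (\<forall>y. Vector_Spaces.linear sc sc (\<lambda>x. f x y))"

text \<open>vd a b = [a |- b], dv a b = [a -| b], pp a b = [a _|_ b]\<close>
definition lie_tri_algebra ::
  "('k::field \<Rightarrow> 'v::ab_group_add \<Rightarrow> 'v) \<Rightarrow> ('v \<Rightarrow> 'v \<Rightarrow> 'v) \<Rightarrow> ('v \<Rightarrow> 'v \<Rightarrow> 'v) \<Rightarrow> ('v \<Rightarrow> 'v \<Rightarrow> 'v) \<Rightarrow> bool" where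
  "lie_tri_algebra sc vd dv pp \<longleftrightarrow>
     vector_space sc \<and> bilinear_map sc vd \<and> bilinear_map sc dv \<and> bilinear_map sc pp \<and>
     (\<forall>a b. dv a b = - vd b a) \<and> (\<forall>a b. pp a b = - pp b a) \<and>
     (\<forall>x1 x2 x3. vd (vd x1 x2) x3 - vd x1 (vd x2 x3) + vd x2 (vd x1 x3) = 0) \<and>
     (\<forall>x1 x2 x3. vd (pp x1 x2) x3 = vd (vd x1 x2) x3) \<and>
     (\<forall>x1 x2 x3. pp (vd x1 x2) x3 - vd x1 (pp x2 x3) - pp (vd x1 x3) x2 = 0) \<and>
     (\<forall>x1 x2 x3. pp (pp x1 x2) x3 + pp (pp x2 x3) x1 + pp (pp x3 x1) x2 = 0)"

datatype 'x letter = Pl 'x | Dt 'x   \<comment> \<open>Pl x = x, Dt x = dotted x\<close>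

fun letter_less :: "'x::linorder letter \<Rightarrow> 'x letter \<Rightarrow> bool" where
  "letter_less (Pl x) (Pl y) = (x < y)"
| "letter_less (Dt x) (Dt y) = (x < y)"
| "letter_less (Pl x) (Dt y) = True"
| "letter_less (Dt x) (Pl y) = False"

text \<open>deg-lex order on words: (u, v) \<in> word_less means u < v\<close>
definition word_less :: "('x::linorder letter list \<times> 'x letter list) set" where
  "word_less = lenlex {(a, b). letter_less a b}"

type_synonym ('x, 'k) apoly = "'x letter list \<Rightarrow>\<^sub>0 'k"

definition wmul :: "'x letter list \<Rightarrow> ('x, 'k::comm_ring_1) apoly \<Rightarrow> 'x letter list \<Rightarrow> ('x, 'k) apoly" where
  "wmul u f v = (\<Sum>w\<in>Poly_Mapping.keys f. Poly_Mapping.single (u @ w @ v) (Poly_Mapping.lookup f w))"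

definition psmult :: "'k::comm_ring_1 \<Rightarrow> ('x, 'k) apoly \<Rightarrow> ('x, 'k) apoly" where
  "psmult a f = (\<Sum>w\<in>Poly_Mapping.keys f. Poly_Mapping.single w (a * Poly_Mapping.lookup f w))"

definition lead :: "('x::linorder, 'k::comm_ring_1) apoly \<Rightarrow> 'x letter list" where
  "lead f = (THE w. w \<in> Poly_Mapping.keys f \<and> (\<forall>v\<in>Poly_Mapping.keys f. v \<noteq> w \<longrightarrow> (v, w) \<in> word_less))"

definition monic :: "('x::linorder, 'k::comm_ring_1) apoly \<Rightarrow> bool" where
  "monic f \<longleftrightarrow> f \<noteq> 0 \<and> Poly_Mapping.lookup f (lead f) = 1"

text \<open>compositions (f,g)_w of inclusion and of intersection, as pairs (polynomial, w)\<close>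
definition compositions ::
  "('x::linorder, 'k::comm_ring_1) apoly \<Rightarrow> ('x, 'k) apoly \<Rightarrow> (('x, 'k) apoly \<times> 'x letter list) set" where
  "compositions f g =
     {(f - wmul u g u', lead f) | u u'. lead f = u @ lead g @ u'} \<union>
     {(wmul [] f u'' - wmul u g [], u @ u' @ u'') | u u' u''.
        lead f = u @ u' \<and> lead g = u' @ u'' \<and> u \<noteq> [] \<and> u' \<noteq> [] \<and> u'' \<noteq> []}"

definition GS_basis :: "('x::linorder, 'k::comm_ring_1) apoly set \<Rightarrow> bool" where
  "GS_basis S \<longleftrightarrow> (\<forall>s\<in>S. monic s) \<and>
     (\<forall>f\<in>S. \<forall>g\<in>S. \<forall>(h, w)\<in>compositions f g.
        \<exists>ts :: ('k \<times> 'x letter list \<times> ('x, 'k) apoly \<times> 'x letter list) list.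
          (\<forall>(a, u, s, v)\<in>set ts. s \<in> S \<and> (u @ lead s @ v, w) \<in> word_less) \<and>
          h = (\<Sum>(a, u, s, v)\<leftarrow>ts. psmult a (wmul u s v)))"

definition coord :: "('k::field \<Rightarrow> 'v::ab_group_add \<Rightarrow> 'v) \<Rightarrow> ('x \<Rightarrow> 'v) \<Rightarrow> 'v \<Rightarrow> 'x \<Rightarrow> 'k" where
  "coord sc e v z = module.representation sc (range e) v (e z)"

definition lin_poly :: "('x \<Rightarrow> 'x letter) \<Rightarrow> ('x \<Rightarrow> 'k::comm_ring_1) \<Rightarrow> ('x, 'k) apoly" where
  "lin_poly L c = (\<Sum>z\<in>{z. c z \<noteq> 0}. Poly_Mapping.single [L z] (c z))"

definition tri_GS_set ::
  "('k::field \<Rightarrow> 'v::ab_group_add \<Rightarrow> 'v) \<Rightarrow> ('v \<Rightarrow> 'v \<Rightarrow> 'v) \<Rightarrow> ('v \<Rightarrow> 'v \<Rightarrow> 'v)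
     \<Rightarrow> ('x::linorder \<Rightarrow> 'v) \<Rightarrow> 'x set \<Rightarrow> ('x, 'k) apoly set" where
  "tri_GS_set sc dv pp e X0 =
     {Poly_Mapping.single [Pl x] 1 | x. x \<in> X0} \<union>
     {Poly_Mapping.single [Pl x, Pl y] 1 - Poly_Mapping.single [Pl y, Pl x] 1
        - lin_poly Pl (coord sc e (dv (e x) (e y))) | x y. x \<notin> X0 \<and> y \<notin> X0 \<and> x > y} \<union>
     {Poly_Mapping.single [Dt x, Pl y] 1 - Poly_Mapping.single [Pl y, Dt x] 1
        - lin_poly Dt (coord sc e (dv (e x) (e y))) | x y. y \<notin> X0} \<union>
     {Poly_Mapping.single [Dt x, Dt y] 1 - Poly_Mapping.single [Dt y, Dt x] 1
        - lin_poly Dt (coord sc e (pp (e x) (e y))) | x y. x > y}"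

end

theory Submission
  imports Defs
begin


lemma lookup_wmul: "Poly_Mapping.lookup (wmul u f v) x =
   (\<Sum>w\<in>Poly_Mapping.keys f. if u @ w @ v = x then Poly_Mapping.lookup f w else 0)"
  unfolding wmul_def lookup_sum lookup_single when_def by (rule refl)

lemma lookup_wmul_app[simp]: "Poly_Mapping.lookup (wmul u f v) (u @ w @ v) = Poly_Mapping.lookup f w"
proof -
  have "(\<Sum>w'\<in>Poly_Mapping.keys f. if u @ w' @ v = u @ w @ v then Poly_Mapping.lookup f w' else 0)
     = (\<Sum>w'\<in>Poly_Mapping.keys f. if w' = w then Poly_Mapping.lookup f w' else 0)"
    by (intro sum.cong) auto
  also have "\<dots> = Poly_Mapping.lookup f w"
    by (simp add: sum.delta' in_keys_iff)
  finally show ?thesis by (simp only: lookup_wmul)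
qed

lemma lookup_wmul_other: "(\<And>w. x \<noteq> u @ w @ v) \<Longrightarrow> Poly_Mapping.lookup (wmul u f v) x = 0"
  unfolding lookup_wmul by (rule sum.neutral) auto

lemma wmul_cases: obtains (app) w where "x = u @ w @ v" | (other) "\<And>w. x \<noteq> u @ w @ v"
  by blast

lemma wmul_add: "wmul u (f + g) v = wmul u f v + wmul u g v"
  apply (rule poly_mapping_eqI)
  subgoal for k by (cases rule: wmul_cases[of k u v]) (simp_all add: lookup_add lookup_wmul_other)
  done

lemma wmul_diff: "wmul u (f - g) v = wmul u f v - wmul u g v"
  apply (rule poly_mapping_eqI)
  subgoal for k by (cases rule: wmul_cases[of k u v]) (simp_all add: lookup_minus lookup_wmul_other)
  done

lemma wmul_uminus: "wmul u (- f) v = - wmul u f v"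
  apply (rule poly_mapping_eqI)
  subgoal for k by (cases rule: wmul_cases[of k u v]) (simp_all add: lookup_wmul_other)
  done

lemma wmul_zero[simp]: "wmul u 0 v = 0"
  by (simp add: wmul_def)

lemma wmul_single: "wmul u (Poly_Mapping.single w c) v = Poly_Mapping.single (u @ w @ v) c"
  apply (rule poly_mapping_eqI)
  subgoal for k by (cases rule: wmul_cases[of k u v]) (auto simp add: lookup_wmul_other lookup_single when_def)
  done

lemma wmul_Nil: "wmul [] f [] = f"
  by (rule poly_mapping_eqI) (metis append.left_neutral append_Nil2 lookup_wmul_app)

lemma lookup_psmult[simp]: "Poly_Mapping.lookup (psmult c f) x = c * Poly_Mapping.lookup f x"
proof -
  have "Poly_Mapping.lookup (psmult c f) x =
     (\<Sum>w\<in>Poly_Mapping.keys f. if w = x then c * Poly_Mapping.lookup f w else 0)"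
    unfolding psmult_def lookup_sum lookup_single when_def by (intro sum.cong) auto
  also have "\<dots> = c * Poly_Mapping.lookup f x"
    by (simp add: sum.delta in_keys_iff)
  finally show ?thesis .
qed

lemma psmult_add: "psmult c (f + g) = psmult c f + psmult c g"
  by (rule poly_mapping_eqI) (simp add: lookup_add algebra_simps)
lemma psmult_1[simp]: "psmult 1 f = f"
  by (rule poly_mapping_eqI) simp
lemma psmult_mult: "psmult c (psmult d f) = psmult (c * d) f"
  by (rule poly_mapping_eqI) (simp add: algebra_simps)
lemma psmult_m1: "psmult (-1) f = - f"
  by (rule poly_mapping_eqI) simp
lemma psmult_0[simp]: "psmult c 0 = 0"
  by (rule poly_mapping_eqI) simp
lemma wmul_psmult: "wmul u (psmult c f) v = psmult c (wmul u f v)"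
  apply (rule poly_mapping_eqI)
  subgoal for k by (cases rule: wmul_cases[of k u v]) (simp_all add: lookup_wmul_other)
  done



lemma letter_less_irrefl: "\<not> letter_less a a"
  by (cases a) auto
lemma letter_less_trans: "letter_less a b \<Longrightarrow> letter_less b c \<Longrightarrow> letter_less a c"
  by (cases a; cases b; cases c) auto

lemma trans_ll: "trans {(a, b). letter_less a b}"
  by (auto intro: transI letter_less_trans)
lemma irrefl_ll: "irrefl {(a, b). letter_less a b}"
  by (auto simp: irrefl_def letter_less_irrefl)

lemma word_less_irrefl: "(w, w) \<notin> word_less"
  unfolding word_less_def by (rule lenlex_irreflexive) (simp add: letter_less_irrefl)
lemma word_less_trans: "(a, b) \<in> word_less \<Longrightarrow> (b, c) \<in> word_less \<Longrightarrow> (a, c) \<in> word_less"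
  unfolding word_less_def using lenlex_trans trans_ll by blast
lemma word_less_asym: "(a, b) \<in> word_less \<Longrightarrow> (b, a) \<notin> word_less"
  using word_less_irrefl word_less_trans by blast

lemma lead_eqI:
  assumes "Poly_Mapping.lookup f w \<noteq> 0"
    and "\<And>v. Poly_Mapping.lookup f v \<noteq> 0 \<Longrightarrow> v \<noteq> w \<Longrightarrow> (v, w) \<in> word_less"
  shows "lead f = w"
  unfolding lead_def
proof (rule the_equality)
  show "w \<in> Poly_Mapping.keys f \<and> (\<forall>v\<in>Poly_Mapping.keys f. v \<noteq> w \<longrightarrow> (v, w) \<in> word_less)"
    using assms by (auto simp: in_keys_iff)
next
  fix w' assume h: "w' \<in> Poly_Mapping.keys f \<and> (\<forall>v\<in>Poly_Mapping.keys f. v \<noteq> w' \<longrightarrow> (v, w') \<in> word_less)"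
  show "w' = w"
  proof (rule ccontr)
    assume ne: "w' \<noteq> w"
    have "(w', w) \<in> word_less" using h ne assms by (auto simp: in_keys_iff)
    moreover have "(w, w') \<in> word_less" using h ne assms by (auto simp: in_keys_iff)
    ultimately show False using word_less_asym by blast
  qed
qed

definition triv :: "('x::linorder, 'k::comm_ring_1) apoly set \<Rightarrow> 'x letter list \<Rightarrow> ('x, 'k) apoly \<Rightarrow> bool" where
  "triv S w h \<longleftrightarrow> (\<exists>ts :: ('k \<times> 'x letter list \<times> ('x, 'k) apoly \<times> 'x letter list) list.
          (\<forall>(a, u, s, v)\<in>set ts. s \<in> S \<and> (u @ lead s @ v, w) \<in> word_less) \<and>
          h = (\<Sum>(a, u, s, v)\<leftarrow>ts. psmult a (wmul u s v)))"

lemma triv_0: "triv S w 0"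
  unfolding triv_def by (rule exI[of _ "[]"]) simp

lemma triv_add: "triv S w f \<Longrightarrow> triv S w g \<Longrightarrow> triv S w (f + g)"
  unfolding triv_def
  apply (elim exE conjE)
  subgoal for ts1 ts2 by (rule exI[of _ "ts1 @ ts2"]) auto
  done

lemma psmult_sum_list: "psmult c (sum_list (map F ts)) = sum_list (map (\<lambda>t. psmult c (F t)) ts)"
  by (induction ts) (simp_all add: psmult_add)

lemma triv_psmult: "triv S w f \<Longrightarrow> triv S w (psmult c f)"
  unfolding triv_def
  apply (elim exE conjE)
  subgoal for ts
    apply (rule exI[of _ "map (\<lambda>(a, u, s, v). (c * a, u, s, v)) ts"])
    apply (auto simp: psmult_sum_list o_def split_def psmult_mult)
    done
  done

lemma triv_uminus: "triv S w f \<Longrightarrow> triv S w (- f)"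
  using triv_psmult[of S w f "-1"] by (simp add: psmult_m1)

lemma triv_diff: "triv S w f \<Longrightarrow> triv S w g \<Longrightarrow> triv S w (f - g)"
  using triv_add[of S w f "- g"] triv_uminus by fastforce

lemma triv_gen: "s \<in> S \<Longrightarrow> (u @ lead s @ v, w) \<in> word_less \<Longrightarrow> triv S w (wmul u s v)"
  unfolding triv_def by (rule exI[of _ "[(1, u, s, v)]"]) simp

lemma triv_sum: "finite A \<Longrightarrow> (\<And>i. i \<in> A \<Longrightarrow> triv S w (F i)) \<Longrightarrow> triv S w (sum F A)"
  by (induction A rule: finite_induct) (auto intro: triv_0 triv_add)



lemma lookup_lin_poly_other: "(\<And>z. v \<noteq> [L z]) \<Longrightarrow> Poly_Mapping.lookup (lin_poly L c) v = 0"
  unfolding lin_poly_def lookup_sum lookup_single when_def by (rule sum.neutral) auto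

lemma lookup_lin_poly_single:
  assumes "finite {z. c z \<noteq> 0}" "inj L"
  shows "Poly_Mapping.lookup (lin_poly L c) [L z] = c z"
proof -
  have "Poly_Mapping.lookup (lin_poly L c) [L z] = (\<Sum>z'\<in>{z. c z \<noteq> 0}. if z' = z then c z' else 0)"
    unfolding lin_poly_def lookup_sum lookup_single when_def
    using assms(2) by (intro sum.cong) (auto dest: injD)
  also have "\<dots> = c z" using assms(1) by (simp add: sum.delta')
  finally show ?thesis .
qed

lemma lookup_lin_poly_nz: "Poly_Mapping.lookup (lin_poly L c) v \<noteq> 0 \<Longrightarrow> \<exists>z. v = [L z]"
  using lookup_lin_poly_other by metis

lemma psmult_0_left[simp]: "psmult 0 f = 0"
  by (rule poly_mapping_eqI) simp

lemma inj_Pl: "inj Pl" by (auto intro: injI)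
lemma inj_Dt: "inj Dt" by (auto intro: injI)

locale tri =
  fixes sc :: "'k::field \<Rightarrow> 'v::ab_group_add \<Rightarrow> 'v"
    and vd dv pp :: "'v \<Rightarrow> 'v \<Rightarrow> 'v"
    and e :: "'x::linorder \<Rightarrow> 'v"
    and X0 :: "'x set"
  assumes char: "(2::'k) \<noteq> 0"
    and L: "lie_tri_algebra sc vd dv pp"
    and inj: "inj e"
    and indep: "\<not> module.dependent sc (range e)"
    and spanning: "module.span sc (range e) = UNIV"
    and X0_indep: "\<not> module.dependent sc (e ` X0)"
    and X0_span: "module.span sc (e ` X0) =
       module.span sc ({vd a b - dv a b | a b. True} \<union> {vd a b - pp a b | a b. True})"
begin

sublocale vs: vector_space sc
  using L unfolding lie_tri_algebra_def by simp

lemma coord_add: "coord sc e (a + b) z = coord sc e a z + coord sc e b z"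
  unfolding coord_def using vs.representation_add[OF indep] spanning by simp

lemma coord_scale: "coord sc e (sc c a) z = c * coord sc e a z"
  unfolding coord_def using vs.representation_scale[OF indep] spanning by simp

lemma coord_e: "coord sc e (e t) z = (if z = t then 1 else 0)"
  unfolding coord_def using vs.representation_basis[OF indep, of "e t"] inj
  by (auto dest: injD)

lemma coord_fin: "finite {z. coord sc e a z \<noteq> 0}"
proof -
  have "{z. coord sc e a z \<noteq> 0} = e -` {b. vs.representation (range e) a b \<noteq> 0}"
    unfolding coord_def by auto
  then show ?thesis using vs.finite_representation inj
    by (metis finite_vimageI)
qed

definition Llin :: "('x \<Rightarrow> 'x letter) \<Rightarrow> 'v \<Rightarrow> ('x, 'k) apoly" where
  "Llin Lt v = lin_poly Lt (coord sc e v)"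

lemma Llin_add: assumes "inj Lt" shows "Llin Lt (a + b) = Llin Lt a + Llin Lt b"
proof (rule poly_mapping_eqI)
  fix k
  show "Poly_Mapping.lookup (Llin Lt (a + b)) k = Poly_Mapping.lookup (Llin Lt a + Llin Lt b) k"
  proof (cases "\<exists>z. k = [Lt z]")
    case True
    then obtain z where "k = [Lt z]" by blast
    then show ?thesis unfolding Llin_def lookup_add
      using assms by (simp add: lookup_lin_poly_single[OF coord_fin assms] coord_add)
  next
    case False
    then show ?thesis unfolding Llin_def lookup_add
      by (simp add: lookup_lin_poly_other)
  qed
qed

lemma Llin_scale: assumes "inj Lt" shows "Llin Lt (sc c a) = psmult c (Llin Lt a)"
proof (rule poly_mapping_eqI)
  fix k
  show "Poly_Mapping.lookup (Llin Lt (sc c a)) k = Poly_Mapping.lookup (psmult c (Llin Lt a)) k"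
  proof (cases "\<exists>z. k = [Lt z]")
    case True
    then obtain z where "k = [Lt z]" by blast
    then show ?thesis unfolding Llin_def lookup_psmult
      using assms by (simp add: lookup_lin_poly_single[OF coord_fin assms] coord_scale)
  next
    case False
    then show ?thesis unfolding Llin_def lookup_psmult
      by (simp add: lookup_lin_poly_other)
  qed
qed

lemma Llin_e: assumes "inj Lt" shows "Llin Lt (e t) = Poly_Mapping.single [Lt t] 1"
proof (rule poly_mapping_eqI)
  fix k
  show "Poly_Mapping.lookup (Llin Lt (e t)) k = Poly_Mapping.lookup (Poly_Mapping.single [Lt t] 1) k"
  proof (cases "\<exists>z. k = [Lt z]")
    case True
    then obtain z where "k = [Lt z]" by blast
    then show ?thesis unfolding Llin_def
      using assms by (auto simp add: lookup_lin_poly_single[OF coord_fin assms] coord_e lookup_single when_def dest: injD)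
  next
    case False
    then show ?thesis unfolding Llin_def
      by (auto simp add: lookup_lin_poly_other lookup_single when_def)
  qed
qed

lemma Llin_nz: "Poly_Mapping.lookup (Llin Lt v) k \<noteq> 0 \<Longrightarrow> \<exists>z. k = [Lt z]"
  unfolding Llin_def by (rule lookup_lin_poly_nz)

lemma Llin_zero: assumes "inj Lt" shows "Llin Lt 0 = 0"
  using Llin_scale[OF assms, of 0 0] by simp

lemma Llin_uminus: assumes "inj Lt" shows "Llin Lt (- a) = - Llin Lt a"
  using Llin_scale[OF assms, of "-1" a] by (simp add: psmult_m1 vs.scale_minus_left)

lemma Llin_diff: assumes "inj Lt" shows "Llin Lt (a - b) = Llin Lt a - Llin Lt b"
  using Llin_add[OF assms, of a "- b"] Llin_uminus[OF assms, of b] by simp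

end


lemma additive_minus_diff:
  fixes f :: "'a::ab_group_add \<Rightarrow> 'b::ab_group_add"
  assumes h: "\<And>x y. f (x + y) = f x + f y"
  shows "f (- x) = - f x" "f (x - y) = f x - f y" "f 0 = 0"
proof -
  show z: "f 0 = 0" using h[of 0 0] by simp
  have m: "f (- a) = - f a" for a
  proof -
    have "f a + f (- a) = 0" using h[of a "- a"] z by simp
    then show ?thesis by (simp add: eq_neg_iff_add_eq_0 add.commute)
  qed
  show "f (- x) = - f x" by (rule m)
  show "f (x - y) = f x - f y" using h[of x "- y"] m[of y] by simp
qed

context tri begin

lemma bil_vd: "bilinear_map sc vd" and bil_dv: "bilinear_map sc dv" and bil_pp: "bilinear_map sc pp"
  using L unfolding lie_tri_algebra_def by (elim conjE; blast)+

lemma bil_props: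
  assumes "bilinear_map sc f"
  shows "f (a + b) c = f a c + f b c" "f c (a + b) = f c a + f c b"
    "f (sc k a) c = sc k (f a c)" "f c (sc k a) = sc k (f c a)"
    "f (- a) c = - f a c" "f c (- a) = - f c a"
    "f (a - b) c = f a c - f b c" "f c (a - b) = f c a - f c b"
    "f 0 c = 0" "f c 0 = 0"
proof -
  have l1: "Vector_Spaces.linear sc sc (\<lambda>x. f x c)" and l2: "Vector_Spaces.linear sc sc (f c)"
    using assms unfolding bilinear_map_def by auto
  have a1: "\<And>x y. f (x + y) c = f x c + f y c" and s1: "\<And>k x. f (sc k x) c = sc k (f x c)"
    using l1 unfolding Vector_Spaces.linear_iff by auto
  have a2: "\<And>x y. f c (x + y) = f c x + f c y" and s2: "\<And>k x. f c (sc k x) = sc k (f c x)"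
    using l2 unfolding Vector_Spaces.linear_iff by auto
  show "f (a + b) c = f a c + f b c" "f c (a + b) = f c a + f c b"
    "f (sc k a) c = sc k (f a c)" "f c (sc k a) = sc k (f c a)" using a1 a2 s1 s2 by auto
  show "f (- a) c = - f a c" "f (a - b) c = f a c - f b c" "f 0 c = 0"
    using additive_minus_diff[where f="\<lambda>x. f x c", OF a1] by auto
  show "f c (- a) = - f c a" "f c (a - b) = f c a - f c b" "f c 0 = 0"
    using additive_minus_diff[where f="\<lambda>x. f c x", OF a2] by auto
qed

lemmas vd_props = bil_props[OF bil_vd]
lemmas dv_props = bil_props[OF bil_dv]
lemmas pp_props = bil_props[OF bil_pp]

lemma dv_vd: "dv a b = - vd b a" and pp_anti: "pp a b = - pp b a"
  and ax1: "vd (vd x1 x2) x3 - vd x1 (vd x2 x3) + vd x2 (vd x1 x3) = 0"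
  and ax4: "vd (pp x1 x2) x3 = vd (vd x1 x2) x3"
  and ax5: "pp (vd x1 x2) x3 - vd x1 (pp x2 x3) - pp (vd x1 x3) x2 = 0"
  and ax6: "pp (pp x1 x2) x3 + pp (pp x2 x3) x1 + pp (pp x3 x1) x2 = 0"
  using L unfolding lie_tri_algebra_def by (elim conjE; blast)+

lemma half: "sc (1/2) (x + x) = x"
proof -
  have "sc (1/2) (x + x) = sc (1/2) x + sc (1/2) x" by (rule vs.scale_right_distrib)
  also have "\<dots> = sc (1/2 + 1/2) x" by (rule vs.scale_left_distrib[symmetric])
  also have "(1/2 + 1/2 :: 'k) = 1" using char by (simp add: field_simps)
  finally show ?thesis by simp
qed

abbreviation "L0 \<equiv> vs.span (e ` X0)"

lemma F1: "vd (vd a b) c + vd (vd b a) c = 0"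
proof -
  have "vd (vd a b) c + vd (vd b a) c = vd (pp a b) c + vd (pp b a) c" by (simp add: ax4)
  also have "\<dots> = 0" using pp_anti[of b a] by (simp add: vd_props)
  finally show ?thesis .
qed

lemma F3: "vd a b + vd b a \<in> L0"
proof -
  have "vd a b + vd b a \<in> vs.span ({vd a b - dv a b | a b. True} \<union> {vd a b - pp a b | a b. True})"
    by (rule vs.span_base) (auto simp: dv_vd)
  then show ?thesis using X0_span by simp
qed

lemma F2: assumes "u \<in> L0" shows "vd u c = 0"
proof -
  have "u \<in> vs.span ({vd a b - dv a b | a b. True} \<union> {vd a b - pp a b | a b. True})"
    using assms X0_span by simp
  then show ?thesis
  proof (induction rule: vs.span_induct_alt)
    case base then show ?case by (simp add: vd_props)
  next
    case (step k x y)
    have "vd x c = 0" using step(1)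
    proof
      assume "x \<in> {vd a b - dv a b | a b. True}"
      then obtain a b where "x = vd a b - dv a b" by blast
      then show ?thesis using F1[of a b c] by (simp add: vd_props dv_vd)
    next
      assume "x \<in> {vd a b - pp a b | a b. True}"
      then obtain a b where "x = vd a b - pp a b" by blast
      then show ?thesis by (simp add: vd_props ax4)
    qed
    then show ?case using step(2) by (simp add: vd_props)
  qed
qed

lemma F4: assumes "u \<in> L0" shows "vd c u \<in> L0"
proof -
  have "vd c u = (vd c u + vd u c) - vd u c" by simp
  then show ?thesis using F2[OF assms, of c] F3[of c u] by simp
qed

lemma F5: "vd a a \<in> L0"
  using vs.span_scale[OF F3[of a a], of "1/2"] half by simp

lemma F6: "pp a a = 0"
proof -
  have "pp a a + pp a a = 0" using pp_anti[of a a] by (metis add.left_inverse)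
  then show ?thesis using half[of "pp a a"] by simp
qed

lemma span_triv:
  assumes add: "\<And>a b. F (a + b) = F a + F b"
    and scl: "\<And>c a. F (sc c a) = psmult c (F a)"
    and base: "\<And>b. b \<in> B \<Longrightarrow> triv S w (F b)"
    and u: "u \<in> vs.span B"
  shows "triv S w (F u)"
  using u
proof (induction rule: vs.span_induct_alt)
  case base
  have "F 0 = 0" using scl[of 0 0] by simp
  then show ?case by (simp add: triv_0)
next
  case (step c x y)
  then show ?case by (simp add: add scl triv_add triv_psmult base)
qed

lemma span_triv_UNIV:
  assumes add: "\<And>a b. F (a + b) = F a + F b"
    and scl: "\<And>c a. F (sc c a) = psmult c (F a)"
    and base: "\<And>t. triv S w (F (e t))"
  shows "triv S w (F u)"
  by (rule span_triv[OF add scl, of "range e"]) (use base spanning in auto)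

end


lemma wl_len: "length v < length w \<Longrightarrow> (v, w) \<in> word_less"
  by (simp add: word_less_def lenlex_conv)

lemma wl_2: "letter_less b a \<Longrightarrow> ([b, c], [a, d]) \<in> word_less"
  by (simp add: word_less_def lenlex_conv)

context tri begin

definition rel2 :: "'x letter \<Rightarrow> 'x letter \<Rightarrow> ('x \<Rightarrow> 'x letter) \<Rightarrow> 'v \<Rightarrow> ('x, 'k) apoly" where
  "rel2 a b Lt v = Poly_Mapping.single [a, b] 1 - Poly_Mapping.single [b, a] 1 - Llin Lt v"

definition "polB x y = rel2 (Pl x) (Pl y) Pl (dv (e x) (e y))"
definition "polC x y = rel2 (Dt x) (Pl y) Dt (dv (e x) (e y))"
definition "polE x y = rel2 (Dt x) (Dt y) Dt (pp (e x) (e y))"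

abbreviation "S \<equiv> tri_GS_set sc dv pp e X0"

lemma S_eq: "S = {Poly_Mapping.single [Pl x] 1 | x. x \<in> X0} \<union>
   {polB x y | x y. x \<notin> X0 \<and> y \<notin> X0 \<and> x > y} \<union> {polC x y | x y. y \<notin> X0} \<union> {polE x y | x y. x > y}"
  by (simp add: tri_GS_set_def polB_def polC_def polE_def rel2_def Llin_def)

lemma lead_single1: "lead (Poly_Mapping.single [a] (1::'k)) = [a]"
  by (rule lead_eqI) (auto simp: lookup_single when_def)

lemma lookup_rel2_nz: "Poly_Mapping.lookup (rel2 a b Lt v) w \<noteq> 0 \<Longrightarrow> w = [a, b] \<or> w = [b, a] \<or> (\<exists>z. w = [Lt z])"
  unfolding rel2_def lookup_minus by (auto simp: lookup_single when_def split: if_splits dest: Llin_nz)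

lemma lookup_rel2_lead: assumes "letter_less b a" shows "Poly_Mapping.lookup (rel2 a b Lt v) [a, b] = 1"
proof -
  have ab: "a \<noteq> b" using assms letter_less_irrefl by metis
  have "Poly_Mapping.lookup (Llin Lt v) [a, b] = 0"
    using Llin_nz[of Lt v "[a, b]"] by auto
  moreover have "Poly_Mapping.lookup (Poly_Mapping.single [b, a] (1::'k)) [a, b] = 0"
    using ab by (simp add: lookup_single)
  moreover have "Poly_Mapping.lookup (Poly_Mapping.single [a, b] (1::'k)) [a, b] = 1"
    by simp
  ultimately show ?thesis unfolding rel2_def lookup_minus by simp
qed

lemma lead_rel2: "letter_less b a \<Longrightarrow> lead (rel2 a b Lt v) = [a, b]"
  apply (rule lead_eqI)
   apply (simp add: lookup_rel2_lead)
  apply (drule lookup_rel2_nz)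
  apply (elim disjE exE)
    apply simp
   apply (simp add: wl_2)
  apply (simp add: wl_len)
  done

lemma lead_polB: "y < x \<Longrightarrow> lead (polB x y) = [Pl x, Pl y]"
  unfolding polB_def by (rule lead_rel2) simp
lemma lead_polC: "lead (polC x y) = [Dt x, Pl y]"
  unfolding polC_def by (rule lead_rel2) simp
lemma lead_polE: "y < x \<Longrightarrow> lead (polE x y) = [Dt x, Dt y]"
  unfolding polE_def by (rule lead_rel2) simp

lemma monic_rel2: "letter_less b a \<Longrightarrow> monic (rel2 a b Lt v)"
  unfolding monic_def using lead_rel2[of b a Lt v] lookup_rel2_lead[of b a Lt v]
  by (metis lookup_zero zero_neq_one)

lemma monic_S: "s \<in> S \<Longrightarrow> monic s"
  unfolding S_eq
proof (elim UnE CollectE exE conjE)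
  fix x assume "s = Poly_Mapping.single [Pl x] 1"
  then show "monic s" unfolding monic_def
    by (simp add: lead_single1) (metis lookup_single_eq lookup_zero zero_neq_one)
next
  fix x y assume "s = polB x y" "y < x"
  then show "monic s" unfolding polB_def by (simp add: monic_rel2)
next
  fix x y assume "s = polC x y"
  then show "monic s" unfolding polC_def by (simp add: monic_rel2)
next
  fix x y assume "s = polE x y" "y < x"
  then show "monic s" unfolding polE_def by (simp add: monic_rel2)
qed

end


context tri begin

lemma S_single: "x \<in> X0 \<Longrightarrow> Poly_Mapping.single [Pl x] 1 \<in> S"
  unfolding S_eq by blast
lemma S_B: "x \<notin> X0 \<Longrightarrow> y \<notin> X0 \<Longrightarrow> y < x \<Longrightarrow> polB x y \<in> S"
  unfolding S_eq by blast
lemma S_C: "y \<notin> X0 \<Longrightarrow> polC x y \<in> S"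
  unfolding S_eq by blast
lemma S_E: "y < x \<Longrightarrow> polE x y \<in> S"
  unfolding S_eq by blast

lemma triv_X0word:
  assumes "x0 \<in> X0" "length (u @ [Pl x0] @ v) < length w"
  shows "triv S w (Poly_Mapping.single (u @ [Pl x0] @ v) 1)"
  using triv_gen[OF S_single[OF assms(1)], of u v w] assms(2)
  by (simp add: wmul_single lead_single1 wl_len)

lemma triv_L0:
  assumes "u \<in> L0" "1 < length w"
  shows "triv S w (Llin Pl u)"
proof (rule span_triv[OF _ _ _ assms(1)])
  show "Llin Pl (a + b) = Llin Pl a + Llin Pl b" for a b by (rule Llin_add[OF inj_Pl])
  show "Llin Pl (sc c a) = psmult c (Llin Pl a)" for c a by (rule Llin_scale[OF inj_Pl])
  fix b assume "b \<in> e ` X0"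
  then obtain x0 where "x0 \<in> X0" "b = e x0" by blast
  then show "triv S w (Llin Pl b)"
    using triv_X0word[of x0 "[]" "[]" w] assms(2) by (simp add: Llin_e[OF inj_Pl])
qed

lemma eX0_L0: "x \<in> X0 \<Longrightarrow> e x \<in> L0"
  by (rule vs.span_base) blast

lemma triv_B_gen: "x \<notin> X0 \<Longrightarrow> y \<notin> X0 \<Longrightarrow> y < x \<Longrightarrow> length w = 3 \<Longrightarrow> triv S w (polB x y)"
  using triv_gen[OF S_B[of x y], of "[]" "[]" w] by (simp add: wmul_Nil lead_polB wl_len)
lemma triv_C_gen: "y \<notin> X0 \<Longrightarrow> length w = 3 \<Longrightarrow> triv S w (polC x y)"
  using triv_gen[OF S_C[of y x], of "[]" "[]" w] by (simp add: wmul_Nil lead_polC wl_len)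
lemma triv_E_gen: "y < x \<Longrightarrow> length w = 3 \<Longrightarrow> triv S w (polE x y)"
  using triv_gen[OF S_E[of y x], of "[]" "[]" w] by (simp add: wmul_Nil lead_polE wl_len)

lemma L1:
  assumes w: "length w = 3"
  shows "triv S w (Poly_Mapping.single [Pl a, Pl b] 1 - Poly_Mapping.single [Pl b, Pl a] 1
             - Llin Pl (dv (e a) (e b)))"
proof (cases "a \<in> X0 \<or> b \<in> X0")
  case True
  have t1: "triv S w (Poly_Mapping.single [Pl a, Pl b] 1)"
    using True triv_X0word[of a "[]" "[Pl b]" w] triv_X0word[of b "[Pl a]" "[]" w] w by auto
  have t2: "triv S w (Poly_Mapping.single [Pl b, Pl a] 1)"
    using True triv_X0word[of a "[Pl b]" "[]" w] triv_X0word[of b "[]" "[Pl a]" w] w by auto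
  have "dv (e a) (e b) \<in> L0"
    using True
  proof
    assume "a \<in> X0"
    then have "vd (e b) (e a) \<in> L0" using F4 eX0_L0 by blast
    then show ?thesis by (simp add: dv_vd vs.span_neg)
  next
    assume "b \<in> X0"
    then have "vd (e b) (e a) = 0" using F2 eX0_L0 by blast
    then show ?thesis by (simp add: dv_vd vs.span_zero)
  qed
  then have t3: "triv S w (Llin Pl (dv (e a) (e b)))" using triv_L0 w by simp
  show ?thesis using t1 t2 t3 by (intro triv_diff)
next
  case False
  then have na: "a \<notin> X0" and nb: "b \<notin> X0" by auto
  consider "a = b" | "b < a" | "a < b" by fastforce
  then show ?thesis
  proof cases
    case 1
    have "dv (e a) (e a) \<in> L0" using F5 by (simp add: dv_vd vs.span_neg)
    then show ?thesis using 1 triv_L0[of "dv (e a) (e a)" w] w by (simp add: triv_uminus)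
  next
    case 2
    then show ?thesis using triv_B_gen[OF na nb 2 w] by (simp add: polB_def rel2_def)
  next
    case 3
    have eq: "Poly_Mapping.single [Pl a, Pl b] 1 - Poly_Mapping.single [Pl b, Pl a] 1
             - Llin Pl (dv (e a) (e b)) = - polB b a - Llin Pl (dv (e a) (e b) + dv (e b) (e a))"
      by (simp add: polB_def rel2_def Llin_add[OF inj_Pl] algebra_simps)
    have "dv (e a) (e b) + dv (e b) (e a) = - (vd (e b) (e a) + vd (e a) (e b))"
      by (simp add: dv_vd)
    then have "dv (e a) (e b) + dv (e b) (e a) \<in> L0" using F3 vs.span_neg by metis
    then show ?thesis unfolding eq using triv_B_gen[OF nb na 3 w] triv_L0 w
      by (simp add: triv_diff triv_uminus)
  qed
qed

lemma L2:
  assumes w: "length w = 3"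
  shows "triv S w (Poly_Mapping.single [Dt a, Pl b] 1 - Poly_Mapping.single [Pl b, Dt a] 1
             - Llin Dt (dv (e a) (e b)))"
proof (cases "b \<in> X0")
  case True
  have t1: "triv S w (Poly_Mapping.single [Dt a, Pl b] 1)"
    using True triv_X0word[of b "[Dt a]" "[]" w] w by auto
  have t2: "triv S w (Poly_Mapping.single [Pl b, Dt a] 1)"
    using True triv_X0word[of b "[]" "[Dt a]" w] w by auto
  have "vd (e b) (e a) = 0" using F2 eX0_L0 True by blast
  then have "Llin Dt (dv (e a) (e b)) = 0" by (simp add: dv_vd Llin_zero[OF inj_Dt])
  then show ?thesis using t1 t2 by (simp add: triv_diff)
next
  case False
  then show ?thesis using triv_C_gen[OF False w] by (simp add: polC_def rel2_def)
qed

lemma L3: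
  assumes w: "length w = 3"
  shows "triv S w (Poly_Mapping.single [Dt a, Dt b] 1 - Poly_Mapping.single [Dt b, Dt a] 1
             - Llin Dt (pp (e a) (e b)))"
proof -
  consider "a = b" | "b < a" | "a < b" by fastforce
  then show ?thesis
  proof cases
    case 1
    then show ?thesis by (simp add: F6 Llin_zero[OF inj_Dt] triv_0)
  next
    case 2
    then show ?thesis using triv_E_gen[OF 2 w] by (simp add: polE_def rel2_def)
  next
    case 3
    have eq: "Poly_Mapping.single [Dt a, Dt b] 1 - Poly_Mapping.single [Dt b, Dt a] 1
             - Llin Dt (pp (e a) (e b)) = - polE b a - Llin Dt (pp (e a) (e b) + pp (e b) (e a))"
      by (simp add: polE_def rel2_def Llin_add[OF inj_Dt] algebra_simps)
    have "pp (e a) (e b) + pp (e b) (e a) = 0" using pp_anti[of "e a" "e b"] by simp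
    then show ?thesis unfolding eq using triv_E_gen[OF 3 w]
      by (simp add: Llin_zero[OF inj_Dt] triv_uminus)
  qed
qed

end


lemma psmult_diff: "psmult c (f - g) = psmult c f - psmult c g"
  by (rule poly_mapping_eqI) (simp add: lookup_minus algebra_simps)

context tri begin

lemma ext_right:
  assumes f: "bilinear_map sc f" and Lt: "inj Lt" and M: "inj M"
    and base: "\<And>t. triv S w (Poly_Mapping.single [\<alpha>, Lt t] 1 - Poly_Mapping.single [Lt t, \<alpha>] 1 - Llin M (f a (e t)))"
  shows "triv S w (wmul [\<alpha>] (Llin Lt v) [] - wmul [] (Llin Lt v) [\<alpha>] - Llin M (f a v))"
proof (rule span_triv_UNIV[where F = "\<lambda>v. wmul [\<alpha>] (Llin Lt v) [] - wmul [] (Llin Lt v) [\<alpha>] - Llin M (f a v)"])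
  show "wmul [\<alpha>] (Llin Lt (x + y)) [] - wmul [] (Llin Lt (x + y)) [\<alpha>] - Llin M (f a (x + y)) =
    (wmul [\<alpha>] (Llin Lt x) [] - wmul [] (Llin Lt x) [\<alpha>] - Llin M (f a x)) +
    (wmul [\<alpha>] (Llin Lt y) [] - wmul [] (Llin Lt y) [\<alpha>] - Llin M (f a y))" for x y
    by (simp add: Llin_add[OF Lt] Llin_add[OF M] wmul_add bil_props(2)[OF f])
  show "wmul [\<alpha>] (Llin Lt (sc c x)) [] - wmul [] (Llin Lt (sc c x)) [\<alpha>] - Llin M (f a (sc c x)) =
    psmult c (wmul [\<alpha>] (Llin Lt x) [] - wmul [] (Llin Lt x) [\<alpha>] - Llin M (f a x))" for c x
    by (simp add: Llin_scale[OF Lt] Llin_scale[OF M] wmul_psmult bil_props(4)[OF f] psmult_diff)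
  show "triv S w (wmul [\<alpha>] (Llin Lt (e t)) [] - wmul [] (Llin Lt (e t)) [\<alpha>] - Llin M (f a (e t)))" for t
    using base[of t] by (simp add: Llin_e[OF Lt] wmul_single)
qed

lemma ext_left:
  assumes f: "bilinear_map sc f" and Lt: "inj Lt" and M: "inj M"
    and base: "\<And>t. triv S w (Poly_Mapping.single [Lt t, \<beta>] 1 - Poly_Mapping.single [\<beta>, Lt t] 1 - Llin M (f (e t) b))"
  shows "triv S w (wmul [] (Llin Lt v) [\<beta>] - wmul [\<beta>] (Llin Lt v) [] - Llin M (f v b))"
proof (rule span_triv_UNIV[where F = "\<lambda>v. wmul [] (Llin Lt v) [\<beta>] - wmul [\<beta>] (Llin Lt v) [] - Llin M (f v b)"])
  show "wmul [] (Llin Lt (x + y)) [\<beta>] - wmul [\<beta>] (Llin Lt (x + y)) [] - Llin M (f (x + y) b) =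
    (wmul [] (Llin Lt x) [\<beta>] - wmul [\<beta>] (Llin Lt x) [] - Llin M (f x b)) +
    (wmul [] (Llin Lt y) [\<beta>] - wmul [\<beta>] (Llin Lt y) [] - Llin M (f y b))" for x y
    by (simp add: Llin_add[OF Lt] Llin_add[OF M] wmul_add bil_props(1)[OF f])
  show "wmul [] (Llin Lt (sc c x)) [\<beta>] - wmul [\<beta>] (Llin Lt (sc c x)) [] - Llin M (f (sc c x) b) =
    psmult c (wmul [] (Llin Lt x) [\<beta>] - wmul [\<beta>] (Llin Lt x) [] - Llin M (f x b))" for c x
    by (simp add: Llin_scale[OF Lt] Llin_scale[OF M] wmul_psmult bil_props(3)[OF f] psmult_diff)
  show "triv S w (wmul [] (Llin Lt (e t)) [\<beta>] - wmul [\<beta>] (Llin Lt (e t)) [] - Llin M (f (e t) b))" for t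
    using base[of t] by (simp add: Llin_e[OF Lt] wmul_single)
qed

lemmas Ga1 = ext_left[OF bil_dv inj_Pl inj_Pl L1]
lemmas Ga2 = ext_right[OF bil_dv inj_Pl inj_Pl L1]
lemmas Gb1 = ext_right[OF bil_dv inj_Pl inj_Dt L2]
lemmas Gb2 = ext_left[OF bil_dv inj_Dt inj_Dt L2]
lemmas Gc1 = ext_right[OF bil_pp inj_Dt inj_Dt L3]
lemmas Gc2 = ext_left[OF bil_pp inj_Dt inj_Dt L3]


end


context tri begin

lemma caseA:
  assumes nx: "x \<notin> X0" and ny: "y \<notin> X0" and nz: "z \<notin> X0" and zy: "z < y" and yx: "y < x"
  shows "triv S [Pl x, Pl y, Pl z] (wmul [] (polB x y) [Pl z] - wmul [Pl x] (polB y z) [])"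
proof -
  let ?w = "[Pl x, Pl y, Pl z]"
  have w: "length ?w = 3" by simp
  have zx: "z < x" using zy yx by simp
  have g1: "triv S ?w (wmul [Pl y] (polB x z) [])"
    by (rule triv_gen[OF S_B[OF nx nz zx]]) (use zy yx in \<open>simp add: lead_polB zx word_less_def lenlex_conv\<close>)
  have g2: "triv S ?w (wmul [] (polB y z) [Pl x])"
    by (rule triv_gen[OF S_B[OF ny nz zy]]) (use zy yx in \<open>simp add: lead_polB word_less_def lenlex_conv\<close>)
  have g3: "triv S ?w (wmul [] (polB x z) [Pl y])"
    by (rule triv_gen[OF S_B[OF nx nz zx]]) (use zy yx in \<open>simp add: lead_polB zx word_less_def lenlex_conv\<close>)
  have g4: "triv S ?w (wmul [Pl z] (polB x y) [])"
    by (rule triv_gen[OF S_B[OF nx ny yx]]) (use zy yx in \<open>simp add: lead_polB zx word_less_def lenlex_conv\<close>)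
  have G1: "triv S ?w (wmul [] (Llin Pl (dv (e x) (e z))) [Pl y] - wmul [Pl y] (Llin Pl (dv (e x) (e z))) []
       - Llin Pl (dv (dv (e x) (e z)) (e y)))"
    by (rule Ga1) simp
  have G2: "triv S ?w (wmul [Pl x] (Llin Pl (dv (e y) (e z))) [] - wmul [] (Llin Pl (dv (e y) (e z))) [Pl x]
       - Llin Pl (dv (e x) (dv (e y) (e z))))"
    by (rule Ga2) simp
  have G3: "triv S ?w (wmul [Pl z] (Llin Pl (dv (e x) (e y))) [] - wmul [] (Llin Pl (dv (e x) (e y))) [Pl z]
       - Llin Pl (dv (e z) (dv (e x) (e y))))"
    by (rule Ga2) simp
  let ?a = "e x" and ?b = "e y" and ?c = "e z"
  have s1: "dv (dv ?a ?c) ?b = vd ?b (vd ?c ?a)" by (simp add: dv_vd vd_props)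
  have s2: "dv ?a (dv ?b ?c) = vd (vd ?c ?b) ?a" by (simp add: dv_vd vd_props)
  have s3: "dv ?c (dv ?a ?b) = vd (vd ?b ?a) ?c" by (simp add: dv_vd vd_props)
  have f1: "vd (vd ?c ?b) ?a = - vd (vd ?b ?c) ?a" using F1[of ?c ?b ?a] by (simp add: eq_neg_iff_add_eq_0)
  have a1: "vd (vd ?b ?c) ?a = vd ?b (vd ?c ?a) - vd ?c (vd ?b ?a)"
    using ax1[of ?b ?c ?a] by (simp add: algebra_simps eq_diff_eq)
  have "dv (dv ?a ?c) ?b + dv ?a (dv ?b ?c) + dv ?c (dv ?a ?b) = vd ?c (vd ?b ?a) + vd (vd ?b ?a) ?c"
    unfolding s1 s2 s3 f1 a1 by simp
  then have vec: "dv (dv ?a ?c) ?b + dv ?a (dv ?b ?c) + dv ?c (dv ?a ?b) \<in> L0" using F3 by simp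
  have V: "triv S ?w (Llin Pl (dv (dv ?a ?c) ?b + dv ?a (dv ?b ?c) + dv ?c (dv ?a ?b)))"
    by (rule triv_L0[OF vec]) simp
  have eq: "wmul [] (polB x y) [Pl z] - wmul [Pl x] (polB y z) [] =
     - wmul [Pl y] (polB x z) [] - wmul [] (polB y z) [Pl x] + wmul [] (polB x z) [Pl y] + wmul [Pl z] (polB x y) []
     + (wmul [] (Llin Pl (dv (e x) (e z))) [Pl y] - wmul [Pl y] (Llin Pl (dv (e x) (e z))) []
       - Llin Pl (dv (dv (e x) (e z)) (e y)))
     + (wmul [Pl x] (Llin Pl (dv (e y) (e z))) [] - wmul [] (Llin Pl (dv (e y) (e z))) [Pl x]
       - Llin Pl (dv (e x) (dv (e y) (e z))))
     + (wmul [Pl z] (Llin Pl (dv (e x) (e y))) [] - wmul [] (Llin Pl (dv (e x) (e y))) [Pl z]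
       - Llin Pl (dv (e z) (dv (e x) (e y))))
     + Llin Pl (dv (dv ?a ?c) ?b + dv ?a (dv ?b ?c) + dv ?c (dv ?a ?b))"
    unfolding polB_def rel2_def wmul_diff wmul_single Llin_add[OF inj_Pl] by (simp add: algebra_simps)
  show ?thesis unfolding eq
    by (intro triv_add triv_diff triv_uminus g1 g2 g3 g4 G1 G2 G3 V)
qed

lemma caseB:
  assumes ny: "y \<notin> X0" and nz: "z \<notin> X0" and zy: "z < y"
  shows "triv S [Dt x, Pl y, Pl z] (wmul [] (polC x y) [Pl z] - wmul [Dt x] (polB y z) [])"
proof -
  let ?w = "[Dt x, Pl y, Pl z]"
  have g1: "triv S ?w (wmul [] (polC x z) [Pl y])"
    by (rule triv_gen[OF S_C[OF nz]]) (use zy in \<open>simp add: lead_polC word_less_def lenlex_conv\<close>)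
  have g2: "triv S ?w (wmul [Pl z] (polC x y) [])"
    by (rule triv_gen[OF S_C[OF ny]]) (simp add: lead_polC word_less_def lenlex_conv)
  have g3: "triv S ?w (wmul [Pl y] (polC x z) [])"
    by (rule triv_gen[OF S_C[OF nz]]) (simp add: lead_polC word_less_def lenlex_conv)
  have g4: "triv S ?w (wmul [] (polB y z) [Dt x])"
    by (rule triv_gen[OF S_B[OF ny nz zy]]) (use zy in \<open>simp add: lead_polB word_less_def lenlex_conv\<close>)
  have G1: "triv S ?w (wmul [Dt x] (Llin Pl (dv (e y) (e z))) [] - wmul [] (Llin Pl (dv (e y) (e z))) [Dt x]
       - Llin Dt (dv (e x) (dv (e y) (e z))))"
    by (rule Gb1) simp
  have G2: "triv S ?w (wmul [] (Llin Dt (dv (e x) (e z))) [Pl y] - wmul [Pl y] (Llin Dt (dv (e x) (e z))) []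
       - Llin Dt (dv (dv (e x) (e z)) (e y)))"
    by (rule Gb2) simp
  have G3: "triv S ?w (wmul [] (Llin Dt (dv (e x) (e y))) [Pl z] - wmul [Pl z] (Llin Dt (dv (e x) (e y))) []
       - Llin Dt (dv (dv (e x) (e y)) (e z)))"
    by (rule Gb2) simp
  let ?a = "e x" and ?b = "e y" and ?c = "e z"
  have s1: "dv ?a (dv ?b ?c) = vd (vd ?c ?b) ?a" by (simp add: dv_vd vd_props)
  have s2: "dv (dv ?a ?c) ?b = vd ?b (vd ?c ?a)" by (simp add: dv_vd vd_props)
  have s3: "dv (dv ?a ?b) ?c = vd ?c (vd ?b ?a)" by (simp add: dv_vd vd_props)
  have vec: "dv ?a (dv ?b ?c) + dv (dv ?a ?c) ?b - dv (dv ?a ?b) ?c = 0"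
    unfolding s1 s2 s3 using ax1[of ?c ?b ?a] by (simp add: algebra_simps)
  have eq: "wmul [] (polC x y) [Pl z] - wmul [Dt x] (polB y z) [] =
     wmul [] (polC x z) [Pl y] + wmul [Pl z] (polC x y) [] - wmul [Pl y] (polC x z) [] - wmul [] (polB y z) [Dt x]
     + (wmul [Dt x] (Llin Pl (dv (e y) (e z))) [] - wmul [] (Llin Pl (dv (e y) (e z))) [Dt x]
       - Llin Dt (dv (e x) (dv (e y) (e z))))
     + (wmul [] (Llin Dt (dv (e x) (e z))) [Pl y] - wmul [Pl y] (Llin Dt (dv (e x) (e z))) []
       - Llin Dt (dv (dv (e x) (e z)) (e y)))
     - (wmul [] (Llin Dt (dv (e x) (e y))) [Pl z] - wmul [Pl z] (Llin Dt (dv (e x) (e y))) []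
       - Llin Dt (dv (dv (e x) (e y)) (e z)))
     + Llin Dt (dv ?a (dv ?b ?c) + dv (dv ?a ?c) ?b - dv (dv ?a ?b) ?c)"
    unfolding polB_def polC_def rel2_def wmul_diff wmul_single Llin_add[OF inj_Dt] Llin_diff[OF inj_Dt]
    by (simp add: algebra_simps)
  show ?thesis unfolding eq vec Llin_zero[OF inj_Dt]
    by (intro triv_add triv_diff triv_uminus g1 g2 g3 g4 G1 G2 G3 triv_0)
qed

lemma caseC:
  assumes nz: "z \<notin> X0" and yx: "y < x"
  shows "triv S [Dt x, Dt y, Pl z] (wmul [] (polE x y) [Pl z] - wmul [Dt x] (polC y z) [])"
proof -
  let ?w = "[Dt x, Dt y, Pl z]"
  have g1: "triv S ?w (wmul [] (polC x z) [Dt y])"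
    by (rule triv_gen[OF S_C[OF nz]]) (simp add: lead_polC word_less_def lenlex_conv)
  have g2: "triv S ?w (wmul [Pl z] (polE x y) [])"
    by (rule triv_gen[OF S_E[OF yx]]) (use yx in \<open>simp add: lead_polE word_less_def lenlex_conv\<close>)
  have g3: "triv S ?w (wmul [Dt y] (polC x z) [])"
    by (rule triv_gen[OF S_C[OF nz]]) (use yx in \<open>simp add: lead_polC word_less_def lenlex_conv\<close>)
  have g4: "triv S ?w (wmul [] (polC y z) [Dt x])"
    by (rule triv_gen[OF S_C[OF nz]]) (use yx in \<open>simp add: lead_polC word_less_def lenlex_conv\<close>)
  have G1: "triv S ?w (wmul [Dt x] (Llin Dt (dv (e y) (e z))) [] - wmul [] (Llin Dt (dv (e y) (e z))) [Dt x]
       - Llin Dt (pp (e x) (dv (e y) (e z))))"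
    by (rule Gc1) simp
  have G2: "triv S ?w (wmul [] (Llin Dt (dv (e x) (e z))) [Dt y] - wmul [Dt y] (Llin Dt (dv (e x) (e z))) []
       - Llin Dt (pp (dv (e x) (e z)) (e y)))"
    by (rule Gc2) simp
  have G3: "triv S ?w (wmul [] (Llin Dt (pp (e x) (e y))) [Pl z] - wmul [Pl z] (Llin Dt (pp (e x) (e y))) []
       - Llin Dt (dv (pp (e x) (e y)) (e z)))"
    by (rule Gb2) simp
  let ?a = "e x" and ?b = "e y" and ?c = "e z"
  have s1: "pp ?a (dv ?b ?c) = pp (vd ?c ?b) ?a"
    using pp_anti[of ?a "vd ?c ?b"] by (simp add: dv_vd pp_props)
  have s2: "pp (dv ?a ?c) ?b = - pp (vd ?c ?a) ?b" by (simp add: dv_vd pp_props)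
  have s3: "dv (pp ?a ?b) ?c = - vd ?c (pp ?a ?b)" by (simp add: dv_vd)
  have vec: "pp ?a (dv ?b ?c) + pp (dv ?a ?c) ?b - dv (pp ?a ?b) ?c = 0"
    unfolding s1 s2 s3 using ax5[of ?c ?a ?b] by (simp add: algebra_simps)
  have eq: "wmul [] (polE x y) [Pl z] - wmul [Dt x] (polC y z) [] =
     wmul [] (polC x z) [Dt y] + wmul [Pl z] (polE x y) [] - wmul [Dt y] (polC x z) [] - wmul [] (polC y z) [Dt x]
     + (wmul [Dt x] (Llin Dt (dv (e y) (e z))) [] - wmul [] (Llin Dt (dv (e y) (e z))) [Dt x]
       - Llin Dt (pp (e x) (dv (e y) (e z))))
     + (wmul [] (Llin Dt (dv (e x) (e z))) [Dt y] - wmul [Dt y] (Llin Dt (dv (e x) (e z))) []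
       - Llin Dt (pp (dv (e x) (e z)) (e y)))
     - (wmul [] (Llin Dt (pp (e x) (e y))) [Pl z] - wmul [Pl z] (Llin Dt (pp (e x) (e y))) []
       - Llin Dt (dv (pp (e x) (e y)) (e z)))
     + Llin Dt (pp ?a (dv ?b ?c) + pp (dv ?a ?c) ?b - dv (pp ?a ?b) ?c)"
    unfolding polE_def polC_def rel2_def wmul_diff wmul_single Llin_add[OF inj_Dt] Llin_diff[OF inj_Dt]
    by (simp add: algebra_simps)
  show ?thesis unfolding eq vec Llin_zero[OF inj_Dt]
    by (intro triv_add triv_diff triv_uminus g1 g2 g3 g4 G1 G2 G3 triv_0)
qed

lemma caseD:
  assumes zy: "z < y" and yx: "y < x"
  shows "triv S [Dt x, Dt y, Dt z] (wmul [] (polE x y) [Dt z] - wmul [Dt x] (polE y z) [])"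
proof -
  let ?w = "[Dt x, Dt y, Dt z]"
  have zx: "z < x" using zy yx by simp
  have g1: "triv S ?w (wmul [Dt y] (polE x z) [])"
    by (rule triv_gen[OF S_E[OF zx]]) (use zy yx in \<open>simp add: lead_polE zx word_less_def lenlex_conv\<close>)
  have g2: "triv S ?w (wmul [] (polE y z) [Dt x])"
    by (rule triv_gen[OF S_E[OF zy]]) (use zy yx in \<open>simp add: lead_polE word_less_def lenlex_conv\<close>)
  have g3: "triv S ?w (wmul [] (polE x z) [Dt y])"
    by (rule triv_gen[OF S_E[OF zx]]) (use zy yx in \<open>simp add: lead_polE zx word_less_def lenlex_conv\<close>)
  have g4: "triv S ?w (wmul [Dt z] (polE x y) [])"
    by (rule triv_gen[OF S_E[OF yx]]) (use zy yx in \<open>simp add: lead_polE zx word_less_def lenlex_conv\<close>)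
  have G1: "triv S ?w (wmul [] (Llin Dt (pp (e x) (e z))) [Dt y] - wmul [Dt y] (Llin Dt (pp (e x) (e z))) []
       - Llin Dt (pp (pp (e x) (e z)) (e y)))"
    by (rule Gc2) simp
  have G2: "triv S ?w (wmul [Dt x] (Llin Dt (pp (e y) (e z))) [] - wmul [] (Llin Dt (pp (e y) (e z))) [Dt x]
       - Llin Dt (pp (e x) (pp (e y) (e z))))"
    by (rule Gc1) simp
  have G3: "triv S ?w (wmul [Dt z] (Llin Dt (pp (e x) (e y))) [] - wmul [] (Llin Dt (pp (e x) (e y))) [Dt z]
       - Llin Dt (pp (e z) (pp (e x) (e y))))"
    by (rule Gc1) simp
  let ?a = "e x" and ?b = "e y" and ?c = "e z"
  have s1: "pp (pp ?a ?c) ?b = - pp (pp ?c ?a) ?b"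
    using pp_anti[of ?a ?c] by (simp add: pp_props)
  have s2: "pp ?a (pp ?b ?c) = - pp (pp ?b ?c) ?a" by (rule pp_anti)
  have s3: "pp ?c (pp ?a ?b) = - pp (pp ?a ?b) ?c" by (rule pp_anti)
  have vec: "pp (pp ?a ?c) ?b + pp ?a (pp ?b ?c) + pp ?c (pp ?a ?b) = 0"
  proof -
    have "pp (pp ?a ?c) ?b + pp ?a (pp ?b ?c) + pp ?c (pp ?a ?b) =
       - (pp (pp ?a ?b) ?c + pp (pp ?b ?c) ?a + pp (pp ?c ?a) ?b)"
      unfolding s1 s2 s3 by (simp add: algebra_simps)
    then show ?thesis using ax6[of ?a ?b ?c] by simp
  qed
  have eq: "wmul [] (polE x y) [Dt z] - wmul [Dt x] (polE y z) [] =
     - wmul [Dt y] (polE x z) [] - wmul [] (polE y z) [Dt x] + wmul [] (polE x z) [Dt y] + wmul [Dt z] (polE x y) []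
     + (wmul [] (Llin Dt (pp (e x) (e z))) [Dt y] - wmul [Dt y] (Llin Dt (pp (e x) (e z))) []
       - Llin Dt (pp (pp (e x) (e z)) (e y)))
     + (wmul [Dt x] (Llin Dt (pp (e y) (e z))) [] - wmul [] (Llin Dt (pp (e y) (e z))) [Dt x]
       - Llin Dt (pp (e x) (pp (e y) (e z))))
     + (wmul [Dt z] (Llin Dt (pp (e x) (e y))) [] - wmul [] (Llin Dt (pp (e x) (e y))) [Dt z]
       - Llin Dt (pp (e z) (pp (e x) (e y))))
     + Llin Dt (pp (pp ?a ?c) ?b + pp ?a (pp ?b ?c) + pp ?c (pp ?a ?b))"
    unfolding polE_def rel2_def wmul_diff wmul_single Llin_add[OF inj_Dt]
    by (simp add: algebra_simps)
  show ?thesis unfolding eq vec Llin_zero[OF inj_Dt]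
    by (intro triv_add triv_diff triv_uminus g1 g2 g3 g4 G1 G2 G3 triv_0)
qed

end


context tri begin

lemma S_lead_cases:
  assumes "s \<in> S"
  shows "(\<exists>x. x \<in> X0 \<and> s = Poly_Mapping.single [Pl x] 1 \<and> lead s = [Pl x]) \<or>
    (\<exists>x y. x \<notin> X0 \<and> y \<notin> X0 \<and> y < x \<and> s = polB x y \<and> lead s = [Pl x, Pl y]) \<or>
    (\<exists>x y. y \<notin> X0 \<and> s = polC x y \<and> lead s = [Dt x, Pl y]) \<or>
    (\<exists>x y. y < x \<and> s = polE x y \<and> lead s = [Dt x, Dt y])"
  using assms unfolding S_eq
  by (auto simp: lead_single1 lead_polB lead_polC lead_polE)

lemma incl:
  assumes f: "f \<in> S" and g: "g \<in> S" and eq: "lead f = u @ lead g @ u'"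
  shows "u = [] \<and> u' = [] \<and> f = g"
  using S_lead_cases[OF f] S_lead_cases[OF g] eq
  by (auto simp: append_eq_Cons_conv Cons_eq_append_conv)

lemma inter:
  assumes f: "f \<in> S" and g: "g \<in> S" and e1: "lead f = u @ u'" and e2: "lead g = u' @ u''"
    and ne: "u \<noteq> []" "u' \<noteq> []" "u'' \<noteq> []"
  shows "triv S (u @ u' @ u'') (wmul [] f u'' - wmul u g [])"
  using S_lead_cases[OF f] S_lead_cases[OF g] e1 e2 ne
  by (auto simp: append_eq_Cons_conv Cons_eq_append_conv intro: caseA caseB caseC caseD)

lemma GS: "GS_basis S"
  unfolding GS_basis_def
proof (intro conjI ballI)
  show "monic s" if "s \<in> S" for s using that by (rule monic_S)
next
  fix f g p assume f: "f \<in> S" and g: "g \<in> S" and p: "p \<in> compositions f g"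
  obtain h w where hw: "p = (h, w)" by fastforce
  have "triv S w h" using p unfolding hw compositions_def
  proof (elim UnE CollectE exE conjE)
    fix u u' assume "(h, w) = (f - wmul u g u', lead f)" "lead f = u @ lead g @ u'"
    moreover from incl[OF f g this(2)] have "u = []" "u' = []" "f = g" by auto
    ultimately show "triv S w h" by (simp add: wmul_Nil triv_0)
  next
    fix u u' u'' assume "(h, w) = (wmul [] f u'' - wmul u g [], u @ u' @ u'')"
      "lead f = u @ u'" "lead g = u' @ u''" "u \<noteq> []" "u' \<noteq> []" "u'' \<noteq> []"
    then show "triv S w h" using inter[OF f g] by auto
  qed
  then show "case p of (h, w) \<Rightarrow> \<exists>ts. (\<forall>(a, u, s, v)\<in>set ts. s \<in> S \<and> (u @ lead s @ v, w) \<in> word_less) \<and>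
          h = (\<Sum>(a, u, s, v)\<leftarrow>ts. psmult a (wmul u s v))"
    unfolding hw triv_def by simp
qed

end


theorem theorem5p3:
  fixes sc :: "'k::field \<Rightarrow> 'v::ab_group_add \<Rightarrow> 'v"
    and vd dv pp :: "'v \<Rightarrow> 'v \<Rightarrow> 'v"
    and e :: "'x::linorder \<Rightarrow> 'v"
    and X0 :: "'x set"
  assumes char: "(2::'k) \<noteq> 0"
    and L: "lie_tri_algebra sc vd dv pp"
    and inj: "inj e"
    and indep: "\<not> module.dependent sc (range e)"
    and spanning: "module.span sc (range e) = UNIV"
    and X0_indep: "\<not> module.dependent sc (e ` X0)"
    and X0_span: "module.span sc (e ` X0) =
       module.span sc ({vd a b - dv a b | a b. True} \<union> {vd a b - pp a b | a b. True})"
  shows "GS_basis (tri_GS_set sc dv pp e X0)"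
  proof -
  interpret t: tri sc vd dv pp e X0
    by (rule tri.intro[OF char L inj indep spanning X0_indep X0_span])
  show ?thesis by (rule t.GS)
qed

end
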